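(* Let $s_p,s_q\in S$ with $s_p$ to the left of $s_q$. Let $W_p$ be the wedge with apex $s_p$ whose axis points downward to the right making angle $\theta_p$ with the horizontal, and $W_q$ the wedge with apex $s_q$ whose axis points downward to the left making angle $\theta_q$ with the horizontal, where $\theta_p-\alpha>0$, $\theta_q-\alpha>0$ and $\theta_p+\theta_q+2\alpha<\pi$, so that $W_p\cap W_q$ is a convex quadrilateral. Each wedge is bounded by an inner ray (angle $\theta-\alpha$ below the horizontal) and an outer ray (angle $\theta+\alpha$ below the horizontal). Let $v_1$ be the intersection of the two inner rays, $v_3$ the intersection of the two outer rays, $v_2$ the intersection of the outer ray of $W_p$ with the inner ray of $W_q$, and $v_4$ the intersection of the inner ray of $W_p$ with the outer ray of $W_q$; set $\mathrm{diag}_1=|v_1v_3|$ and $\mathrm{diag}_2=|v_2v_4|$. If $\theta_p+\theta_q\ge\frac{\pi}{2}+\alpha$, then $\mathrm{diag}_1>\mathrm{diag}_2$.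
   Context: Work in $\mathbb{R}^2$ with coordinates $(x,z)$; the viewing line is $S=\{z=h\}$, $h>0$. Fix $\alpha>0$. A wedge with apex $s$ and axis unit vector $u$ is $W(s,u)=\{s+rv:\ r\ge0,\ |v|=1,\ \angle(v,u)\le\alpha\}$ (opening angle $2\alpha$). *)

theory Defs
  imports "HOL-Analysis.Analysis"
begin

definition ray :: "real \<times> real \<Rightarrow> real \<times> real \<Rightarrow> (real \<times> real) set" where
  "ray s d = {s + r *\<^sub>R d | r. r \<ge> 0}"

definition dir_right :: "real \<Rightarrow> real \<times> real" where
  "dir_right phi = (cos phi, - sin phi)"

definition dir_left :: "real \<Rightarrow> real \<times> real" where
  "dir_left phi = (- cos phi, - sin phi)"

end

theory Submission imports Defs begin

lemma cs: "(cos t)^2 = 1 - (sin t)^2" for t :: real by (simp add: cos_squared_eq)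

lemma I1: "(sin x)^2 - (sin (x - b))^2 = sin b * sin (2 * x - b)" for x b :: real
  apply (simp add: sin_diff sin_double cos_double)
  using cs[of x] cs[of b] by algebra

lemma I2: "(sin x)^2 - (sin (x + b))^2 = - (sin b * sin (2 * x + b))" for x b :: real
  apply (simp add: sin_add sin_double cos_double)
  using cs[of x] cs[of b] by algebra

lemma I3: "(sin x)^2 - sin (x - b) * sin (x + b) = (sin b)^2" for x b :: real
  apply (simp add: sin_add sin_diff)
  using cs[of x] cs[of b] by algebra

lemma I4: "(sin (x+b))^2 * sin (2 * x - b) - 2 * cos b * sin b * sin (x+b) * sin x - (sin x)^2 * sin (2 * x+b)
   = -((sin b)^2 * sin (2 * x+b))" for x b :: real
  apply (simp add: sin_add sin_diff sin_double cos_double)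
  using cs[of x] cs[of b] by algebra

lemma I5': "sin (q + c) * sin (p + q) - sin q * sin (p + q + c) = sin p * sin c" for p q c :: real
  apply (simp add: sin_add cos_add)
  using cs[of p] cs[of q] cs[of c] by algebra

lemma I5: "sin (f + a) * sin (x - 2 * a) - sin (f - a) * sin x = sin (x - f - a) * sin (2 * a)" for x f a :: real
  using I5'[of "f - a" "2 * a" "x - f - a"] by (simp add: algebra_simps)

lemma keyid: "S0 * Sm * (u^2 * Sp^2 * F - v^2 * Sm^2 * G - 2 * c * k * u * v * Sm * Sp) = S0 * v * (v * Sm - u * S0) * (-(Sm^2 * G)) + Sm^2 * u * v * (Sp^2 * F - 2 * c * k * Sp * S0 - S0^2 * G)
      - Sp^2 * F * u * (v * Sm - u * S0) * Sm" for u v Sm Sp S0 k c F G :: real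
  by (simp add: algebra_simps power2_eq_square)

lemma keyalg:
  fixes u v Sm Sp S0 k c F G :: real
  assumes "u > 0" "v > 0" "Sm > 0" "Sp > 0" "S0 > 0" "k > 0" "F \<le> 0" "G < 0"
    and i1: "S0^2 - Sm^2 = k * F" and i2: "S0^2 - Sp^2 = -(k * G)" and i3: "S0^2 - Sm * Sp = k^2"
    and i4: "Sp^2 * F - 2 * c * k * Sp * S0 - S0^2 * G = -(k^2 * G)"
    and i5: "v * Sm - u * S0 > 0"
  shows "(u/S0)^2 + (v/S0)^2 - 2 * c * (u/S0) * (v/S0) < (u/Sm)^2 + (v/Sp)^2 - 2 * c * (u/Sm) * (v/Sp)"
proof -
  define g where "g = u^2 * Sp^2 * F - v^2 * Sm^2 * G - 2 * c * k * u * v * Sm * Sp"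
  define w where "w = v * Sm - u * S0"
  have key: "S0 * Sm * g = S0 * v * w * (-(Sm^2 * G)) + Sm^2 * u * v * (Sp^2 * F - 2 * c * k * Sp * S0 - S0^2 * G)
      - Sp^2 * F * u * w * Sm"
    unfolding g_def w_def by (rule keyid)
  have w0: "w > 0" using i5 w_def by simp
  have "S0 * v * w * Sm^2 > 0" using assms w0 by simp
  from mult_pos_neg[OF this \<open>G < 0\<close>]
  have t1: "S0 * v * w * (-(Sm^2 * G)) > 0" by simp
  have t2: "Sm^2 * u * v * (Sp^2 * F - 2 * c * k * Sp * S0 - S0^2 * G) > 0"
    unfolding i4 using assms by (simp add: mult_pos_pos mult_pos_neg)
  have t3: "Sp^2 * F * u * w * Sm \<le> 0"
    using assms w0 by (simp add: mult_nonpos_nonneg mult_nonneg_nonneg mult_le_0_iff)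
  have "S0 * Sm * g > 0" using key t1 t2 t3 by linarith
  moreover have "S0 * Sm > 0" using assms by simp
  ultimately have gpos: "g > 0" using zero_less_mult_pos by blast
  define X where "X = u/Sm"
  define Y where "Y = v/Sp"
  define Z where "Z = u/S0"
  define W where "W = v/S0"
  have a1: "Sm * Sp * S0 * X = u * Sp * S0" and a2: "Sm * Sp * S0 * Y = v * Sm * S0"
    and a3: "Sm * Sp * S0 * Z = u * Sm * Sp" and a4: "Sm * Sp * S0 * W = v * Sm * Sp"
    using \<open>Sm > 0\<close> \<open>Sp > 0\<close> \<open>S0 > 0\<close> by (simp_all add: X_def Y_def Z_def W_def)
  have "k * g = u^2 * Sp^2 * (S0^2 - Sm^2) + v^2 * Sm^2 * (S0^2 - Sp^2) - 2 * c * u * v * Sm * Sp * (S0^2 - Sm * Sp)"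
    unfolding i1 i2 i3 g_def by algebra
  also have "\<dots> = (u * Sp * S0)^2 + (v * Sm * S0)^2 - 2 * c * (u * Sp * S0) * (v * Sm * S0)
      - ((u * Sm * Sp)^2 + (v * Sm * Sp)^2 - 2 * c * (u * Sm * Sp) * (v * Sm * Sp))"
    by algebra
  also have "\<dots> = (Sm * Sp * S0 * X)^2 + (Sm * Sp * S0 * Y)^2 - 2 * c * (Sm * Sp * S0 * X) * (Sm * Sp * S0 * Y)
      - ((Sm * Sp * S0 * Z)^2 + (Sm * Sp * S0 * W)^2 - 2 * c * (Sm * Sp * S0 * Z) * (Sm * Sp * S0 * W))"
    unfolding a1 a2 a3 a4 ..
  also have "\<dots> = (Sm * Sp * S0)^2 * ((X^2 + Y^2 - 2 * c * X * Y) - (Z^2 + W^2 - 2 * c * Z * W))"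
    by algebra
  finally have ident: "(Sm * Sp * S0)^2 * ((X^2 + Y^2 - 2 * c * X * Y) - (Z^2 + W^2 - 2 * c * Z * W)) = k * g" ..
  have "k * g > 0" using gpos \<open>k > 0\<close> by simp
  hence "(X^2 + Y^2 - 2 * c * X * Y) - (Z^2 + W^2 - 2 * c * Z * W) > 0"
  proof -
    have "(Sm * Sp * S0)^2 > 0" using \<open>Sm > 0\<close> \<open>Sp > 0\<close> \<open>S0 > 0\<close> by simp
    moreover have "0 < (Sm * Sp * S0)^2 * ((X^2 + Y^2 - 2 * c * X * Y) - (Z^2 + W^2 - 2 * c * Z * W))"
      unfolding ident by (rule \<open>k * g > 0\<close>)
    ultimately show ?thesis using zero_less_mult_pos by blast
  qed
  thus ?thesis unfolding X_def Y_def Z_def W_def by linarith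
qed

lemma inter:
  assumes "v \<in> ray (xp, h) (dir_right A) \<inter> ray (xq, h) (dir_left B)"
  obtains r where "r \<ge> 0" "v = (xp + r * cos A, h - r * sin A)" "r * sin (A + B) = (xq - xp) * sin B"
proof -
  obtain r where r: "r \<ge> 0" "v = (xp, h) + r *\<^sub>R (cos A, - sin A)"
    using assms unfolding ray_def dir_right_def by auto
  obtain r' where r': "v = (xq, h) + r' *\<^sub>R (- cos B, - sin B)"
    using assms unfolding ray_def dir_left_def by auto
  have e1: "xp + r * cos A = xq - r' * cos B" and e2: "r * sin A = r' * sin B"
    using r(2) r' by auto
  have "r * sin (A + B) = (xq - xp) * sin B"
    unfolding sin_add
  proof -
    have "r * (sin A * cos B + cos A * sin B) = (r * sin A) * cos B + (r * cos A) * sin B" by algebra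
    also have "\<dots> = r' * sin B * cos B + (xq - xp - r' * cos B) * sin B" using e1 e2 by algebra
    also have "\<dots> = (xq - xp) * sin B" by algebra
    finally show "r * (sin A * cos B + cos A * sin B) = (xq - xp) * sin B" .
  qed
  moreover have "v = (xp + r * cos A, h - r * sin A)" using r(2) by simp
  ultimately show ?thesis using that r(1) by blast
qed

lemma distsq:
  "(dist (xp + r * cos A, h - r * sin A) (xp + t * cos A', h - t * sin A'))^2
     = r^2 + t^2 - 2 * r * t * cos (A - A')"
  unfolding dist_Pair_Pair dist_real_def
  apply (simp add: cos_diff power2_abs)
  using cs[of A] cs[of A'] by algebra


theorem lemma3:
  fixes h \<alpha> xp xq \<theta>p \<theta>q :: real and v1 v2 v3 v4 :: "real \<times> real"
  assumes "h > 0" and "\<alpha> > 0" and "xp < xq"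
    and "\<theta>p - \<alpha> > 0" and "\<theta>q - \<alpha> > 0" and "\<theta>p + \<theta>q + 2 * \<alpha> < pi"
    and "v1 \<in> ray (xp, h) (dir_right (\<theta>p - \<alpha>)) \<inter> ray (xq, h) (dir_left (\<theta>q - \<alpha>))"
    and "v3 \<in> ray (xp, h) (dir_right (\<theta>p + \<alpha>)) \<inter> ray (xq, h) (dir_left (\<theta>q + \<alpha>))"
    and "v2 \<in> ray (xp, h) (dir_right (\<theta>p + \<alpha>)) \<inter> ray (xq, h) (dir_left (\<theta>q - \<alpha>))"
    and "v4 \<in> ray (xp, h) (dir_right (\<theta>p - \<alpha>)) \<inter> ray (xq, h) (dir_left (\<theta>q + \<alpha>))"
    and "\<theta>p + \<theta>q \<ge> pi / 2 + \<alpha>"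
  shows "dist v1 v3 > dist v2 v4"
proof -
  define L where "L = xq - xp"
  define s where "s = \<theta>p + \<theta>q"
  have L0: "L > 0" using assms(3) L_def by simp
  obtain r1 where r1: "v1 = (xp + r1 * cos (\<theta>p - \<alpha>), h - r1 * sin (\<theta>p - \<alpha>))"
      "r1 * sin (\<theta>p - \<alpha> + (\<theta>q - \<alpha>)) = (xq - xp) * sin (\<theta>q - \<alpha>)"
    using inter[OF assms(7)] by blast
  obtain r3 where r3: "v3 = (xp + r3 * cos (\<theta>p + \<alpha>), h - r3 * sin (\<theta>p + \<alpha>))"
      "r3 * sin (\<theta>p + \<alpha> + (\<theta>q + \<alpha>)) = (xq - xp) * sin (\<theta>q + \<alpha>)"
    using inter[OF assms(8)] by blast
  obtain r2 where r2: "v2 = (xp + r2 * cos (\<theta>p + \<alpha>), h - r2 * sin (\<theta>p + \<alpha>))"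
      "r2 * sin (\<theta>p + \<alpha> + (\<theta>q - \<alpha>)) = (xq - xp) * sin (\<theta>q - \<alpha>)"
    using inter[OF assms(9)] by blast
  obtain r4 where r4: "v4 = (xp + r4 * cos (\<theta>p - \<alpha>), h - r4 * sin (\<theta>p - \<alpha>))"
      "r4 * sin (\<theta>p - \<alpha> + (\<theta>q + \<alpha>)) = (xq - xp) * sin (\<theta>q + \<alpha>)"
    using inter[OF assms(10)] by blast
  have ang: "\<theta>p - \<alpha> + (\<theta>q - \<alpha>) = s - 2 * \<alpha>" "\<theta>p + \<alpha> + (\<theta>q + \<alpha>) = s + 2 * \<alpha>"
    "\<theta>p + \<alpha> + (\<theta>q - \<alpha>) = s" "\<theta>p - \<alpha> + (\<theta>q + \<alpha>) = s"
    by (simp_all add: s_def)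
  define u where "u = sin (\<theta>q - \<alpha>)"
  define v where "v = sin (\<theta>q + \<alpha>)"
  define Sm where "Sm = sin (s - 2 * \<alpha>)"
  define Sp where "Sp = sin (s + 2 * \<alpha>)"
  define S0 where "S0 = sin s"
  define k where "k = sin (2 * \<alpha>)"
  define c where "c = cos (2 * \<alpha>)"
  define F where "F = sin (2 * s - 2 * \<alpha>)"
  define G where "G = sin (2 * s + 2 * \<alpha>)"
  have sp: "s \<ge> pi / 2 + \<alpha>" "s + 2 * \<alpha> < pi" using assms(11,6) s_def by simp_all
  have u0: "u > 0" unfolding u_def using assms(2,4,5,6) by (intro sin_gt_zero) auto
  have v0: "v > 0" unfolding v_def using assms(2,4,5,6) by (intro sin_gt_zero) auto
  have Sm0: "Sm > 0" unfolding Sm_def using assms(2,4,5,6) s_def by (intro sin_gt_zero) auto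
  have Sp0: "Sp > 0" unfolding Sp_def using assms(2,4,5,6) s_def by (intro sin_gt_zero) auto
  have S00: "S0 > 0" unfolding S0_def using assms(2,4,5,6) s_def by (intro sin_gt_zero) auto
  have k0: "k > 0" unfolding k_def using assms(2,4,5,6) by (intro sin_gt_zero) auto
  have F0: "F \<le> 0" unfolding F_def using sp assms(2) by (intro sin_le_zero) auto
  have G0: "G < 0"
  proof -
    have "sin (2 * s + 2 * \<alpha> - pi) > 0" using sp assms(2) by (intro sin_gt_zero) auto
    moreover have "sin (2 * s + 2 * \<alpha> - pi) = - sin (2 * s + 2 * \<alpha>)" by (simp add: sin_diff)
    ultimately show ?thesis unfolding G_def by simp
  qed
  have i1: "S0^2 - Sm^2 = k * F" unfolding S0_def Sm_def k_def F_def by (rule I1)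
  have i2: "S0^2 - Sp^2 = -(k * G)" unfolding S0_def Sp_def k_def G_def using I2[of s "2 * \<alpha>"] by simp
  have i3: "S0^2 - Sm * Sp = k^2" unfolding S0_def Sm_def Sp_def k_def by (rule I3)
  have i4: "Sp^2 * F - 2 * c * k * Sp * S0 - S0^2 * G = -(k^2 * G)"
    unfolding S0_def Sp_def k_def F_def G_def c_def using I4[of s "2 * \<alpha>"] by simp
  have i5: "v * Sm - u * S0 > 0"
  proof -
    have "v * Sm - u * S0 = sin (s - \<theta>q - \<alpha>) * sin (2 * \<alpha>)"
      unfolding u_def v_def Sm_def S0_def by (rule I5)
    moreover have "sin (s - \<theta>q - \<alpha>) > 0" using assms(2,4,5,6) s_def by (intro sin_gt_zero) auto
    ultimately show ?thesis using k0 k_def by simp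
  qed
  have ka: "(u/S0)^2 + (v/S0)^2 - 2 * c * (u/S0) * (v/S0) < (u/Sm)^2 + (v/Sp)^2 - 2 * c * (u/Sm) * (v/Sp)"
    by (rule keyalg[OF u0 v0 Sm0 Sp0 S00 k0 F0 G0 i1 i2 i3 i4 i5])
  have e1: "r1 = L * (u / Sm)" using r1(2) Sm0 unfolding ang Sm_def u_def L_def by (simp add: field_simps)
  have e3: "r3 = L * (v / Sp)" using r3(2) Sp0 unfolding ang Sp_def v_def L_def by (simp add: field_simps)
  have e2: "r2 = L * (u / S0)" using r2(2) S00 unfolding ang S0_def u_def L_def by (simp add: field_simps)
  have e4: "r4 = L * (v / S0)" using r4(2) S00 unfolding ang S0_def v_def L_def by (simp add: field_simps)
  have "\<theta>p - \<alpha> - (\<theta>p + \<alpha>) = -(2 * \<alpha>)" by simp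
  hence c1: "cos (\<theta>p - \<alpha> - (\<theta>p + \<alpha>)) = c" unfolding c_def by (simp only: cos_minus)
  have "\<theta>p + \<alpha> - (\<theta>p - \<alpha>) = 2 * \<alpha>" by simp
  hence c2: "cos (\<theta>p + \<alpha> - (\<theta>p - \<alpha>)) = c" unfolding c_def by simp
  have d13: "(dist v1 v3)^2 = L^2 * ((u/Sm)^2 + (v/Sp)^2 - 2 * c * (u/Sm) * (v/Sp))"
    unfolding r1(1) r3(1) distsq c1 e1 e3 by (simp only: power_mult_distrib) algebra
  have d24: "(dist v2 v4)^2 = L^2 * ((u/S0)^2 + (v/S0)^2 - 2 * c * (u/S0) * (v/S0))"
    unfolding r2(1) r4(1) distsq c2 e2 e4 by (simp only: power_mult_distrib) algebra
  have "(dist v2 v4)^2 < (dist v1 v3)^2" unfolding d13 d24 using ka L0 by simp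
  thus ?thesis by (rule power_less_imp_less_base) simp
qed

end
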